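(* Let $\mathbf{F}$ and $\mathbf{E}$ be normed spaces of functions over a set $X$, with $\mathbf{F}$ being $1$-independent. Then: (i) if $\mathbf{E}$ is regular, then so is $Mult(\mathbf{F},\mathbf{E})$; (ii) $Mult(\mathbf{F},\mathbf{E})\subset Mult(\widehat{\mathbf{F}},\widehat{\mathbf{E}})$ and $\|\omega\|_{Mult(\widehat{\mathbf{F}},\widehat{\mathbf{E}})}\le\|\omega\|_{Mult(\mathbf{F},\mathbf{E})}$ for all $\omega\in Mult(\mathbf{F},\mathbf{E})$.
   Context: $\mathcal{F}(X)$ is the space of all functions $X\to\mathbb{C}$ with the topology of pointwise convergence. A normed space of functions (NSF) over $X$ is a linear subspace of $\mathcal{F}(X)$ with a norm for which every point evaluation is bounded; it is $1$-independent if for each $x$ some $f\in\mathbf{F}$ has $f(x)\ne0$, and regular if its closed unit ball is closed in $\mathcal{F}(X)$. For an NSF $\mathbf{F}$, let $C_{\mathbf{F}}$ be the closure in $\mathcal{F}(X)$ of the unit ball of $\mathbf{F}$; $\widehat{\mathbf{F}}=\{\alpha f:\alpha>0,\ f\in C_{\mathbf{F}}\}$ is the NSF over $X$ whose closed unit ball is $C_{\mathbf{F}}$ (norm = Minkowski functional of $C_{\mathbf{F}}$). $Mult(\mathbf{F},\mathbf{E})$ is the set of $\omega:X\to\mathbb{C}$ with $\omega f\in\mathbf{E}$ for all $f\in\mathbf{F}$ and $M_\omega:f\mapsto\omega f$ bounded $\mathbf{F}\to\mathbf{E}$, normed by $\|M_\omega\|$ (a normed space of functions over $X$ when $\mathbf{F}$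 is $1$-independent). *)

theory Defs
  imports "HOL-Analysis.Analysis"
begin

text \<open>A normed space of functions over X (X = UNIV of type 'x) is represented by a
carrier set V of functions 'x => complex together with a norm N.  The space
'x => complex carries the product topology (pointwise convergence), which is the
library's topological_space instance for function types.\<close>

definition nsf :: "('x \<Rightarrow> complex) set \<Rightarrow> (('x \<Rightarrow> complex) \<Rightarrow> real) \<Rightarrow> bool" where
  "nsf V N \<longleftrightarrow>
     (\<lambda>x. 0) \<in> V \<and>
     (\<forall>f\<in>V. \<forall>g\<in>V. (\<lambda>x. f x + g x) \<in> V) \<and>
     (\<forall>f\<in>V. \<forall>c::complex. (\<lambda>x. c * f x) \<in> V) \<and>
     (\<forall>f\<in>V. 0 \<le> N f) \<and>
     (\<forall>f\<in>V. N f = 0 \<longleftrightarrow> f = (\<lambda>x. 0)) \<and>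
     (\<forall>f\<in>V. \<forall>c::complex. N (\<lambda>x. c * f x) = cmod c * N f) \<and>
     (\<forall>f\<in>V. \<forall>g\<in>V. N (\<lambda>x. f x + g x) \<le> N f + N g) \<and>
     (\<forall>x. \<exists>C. \<forall>f\<in>V. cmod (f x) \<le> C * N f)"

definition one_independent :: "('x \<Rightarrow> complex) set \<Rightarrow> bool" where
  "one_independent V \<longleftrightarrow> (\<forall>x. \<exists>f\<in>V. f x \<noteq> 0)"

definition unit_ball_nsf :: "('x \<Rightarrow> complex) set \<Rightarrow> (('x \<Rightarrow> complex) \<Rightarrow> real) \<Rightarrow> ('x \<Rightarrow> complex) set" where
  "unit_ball_nsf V N = {f \<in> V. N f \<le> 1}"

definition regular_nsf :: "('x \<Rightarrow> complex) set \<Rightarrow> (('x \<Rightarrow> complex) \<Rightarrow> real) \<Rightarrow> bool" where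
  "regular_nsf V N \<longleftrightarrow> closed (unit_ball_nsf V N)"

definition C_nsf :: "('x \<Rightarrow> complex) set \<Rightarrow> (('x \<Rightarrow> complex) \<Rightarrow> real) \<Rightarrow> ('x \<Rightarrow> complex) set" where
  "C_nsf V N = closure (unit_ball_nsf V N)"

definition hat_space :: "('x \<Rightarrow> complex) set \<Rightarrow> (('x \<Rightarrow> complex) \<Rightarrow> real) \<Rightarrow> ('x \<Rightarrow> complex) set" where
  "hat_space V N = {(\<lambda>x. complex_of_real a * f x) | a f. a > 0 \<and> f \<in> C_nsf V N}"

definition hat_norm :: "('x \<Rightarrow> complex) set \<Rightarrow> (('x \<Rightarrow> complex) \<Rightarrow> real) \<Rightarrow> ('x \<Rightarrow> complex) \<Rightarrow> real" where
  "hat_norm V N g = Inf {a. a > 0 \<and> (\<exists>f\<in>C_nsf V N. g = (\<lambda>x. complex_of_real a * f x))}"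

definition mult_space :: "('x \<Rightarrow> complex) set \<Rightarrow> (('x \<Rightarrow> complex) \<Rightarrow> real) \<Rightarrow>
    ('x \<Rightarrow> complex) set \<Rightarrow> (('x \<Rightarrow> complex) \<Rightarrow> real) \<Rightarrow> ('x \<Rightarrow> complex) set" where
  "mult_space V N W M = {\<omega>. (\<forall>f\<in>V. (\<lambda>x. \<omega> x * f x) \<in> W) \<and>
                             (\<exists>C. \<forall>f\<in>V. M (\<lambda>x. \<omega> x * f x) \<le> C * N f)}"

definition mult_norm :: "('x \<Rightarrow> complex) set \<Rightarrow> (('x \<Rightarrow> complex) \<Rightarrow> real) \<Rightarrow>
    (('x \<Rightarrow> complex) \<Rightarrow> real) \<Rightarrow> ('x \<Rightarrow> complex) \<Rightarrow> real" where
  "mult_norm V N M \<omega> = Inf {C. 0 \<le> C \<and> (\<forall>f\<in>V. M (\<lambda>x. \<omega> x * f x) \<le> C * N f)}"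

end

theory Submission
  imports Defs
begin

lemma cont_mulmap: "continuous_on UNIV (\<lambda>h::'x\<Rightarrow>complex. \<lambda>x. c * (\<omega> x * h x))"
  apply (rule continuous_on_coordinatewise_then_product)
  apply (intro continuous_intros continuous_on_product_coordinates)
  done

lemma mn_basic:
  assumes V: "nsf V N" and W: "nsf W M" and om: "\<omega> \<in> mult_space V N W M"
  shows "0 \<le> mult_norm V N M \<omega>" "\<forall>f\<in>V. M (\<lambda>x. \<omega> x * f x) \<le> mult_norm V N M \<omega> * N f"
    "\<forall>f\<in>V. (\<lambda>x. \<omega> x * f x) \<in> W"
proof -
  let ?S = "{C. 0 \<le> C \<and> (\<forall>f\<in>V. M (\<lambda>x. \<omega> x * f x) \<le> C * N f)}"
  obtain C where C: "\<forall>f\<in>V. M (\<lambda>x. \<omega> x * f x) \<le> C * N f"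
    and Wm: "\<forall>f\<in>V. (\<lambda>x. \<omega> x * f x) \<in> W" using om unfolding mult_space_def by blast
  have Nnn: "\<forall>f\<in>V. 0 \<le> N f" using V unfolding nsf_def by blast
  have "max C 0 \<in> ?S"
  proof -
    have "C * N f \<le> max C 0 * N f" if "f \<in> V" for f
      using Nnn that by (simp add: mult_right_mono)
    then show ?thesis using C by (auto intro: order_trans)
  qed
  hence ne: "?S \<noteq> {}" by blast
  have bdd: "bdd_below ?S" by (rule bdd_belowI[of _ 0]) auto
  show "0 \<le> mult_norm V N M \<omega>" unfolding mult_norm_def
    by (rule cInf_greatest[OF ne]) auto
  show "\<forall>f\<in>V. (\<lambda>x. \<omega> x * f x) \<in> W" by (rule Wm)
  show "\<forall>f\<in>V. M (\<lambda>x. \<omega> x * f x) \<le> mult_norm V N M \<omega> * N f"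
  proof
    fix f assume f: "f \<in> V"
    show "M (\<lambda>x. \<omega> x * f x) \<le> mult_norm V N M \<omega> * N f"
    proof (cases "N f = 0")
      case True
      hence "f = (\<lambda>x. 0)" using V f unfolding nsf_def by blast
      moreover have "M (\<lambda>x. 0) = 0" using W unfolding nsf_def by blast
      ultimately show ?thesis using True by simp
    next
      case False
      hence pos: "N f > 0" using Nnn f by force
      have "M (\<lambda>x. \<omega> x * f x) / N f \<le> mult_norm V N M \<omega>" unfolding mult_norm_def
      proof (rule cInf_greatest[OF ne])
        fix C assume "C \<in> ?S"
        thus "M (\<lambda>x. \<omega> x * f x) / N f \<le> C" using f pos by (simp add: divide_le_eq)
      qed
      thus ?thesis using pos by (simp add: divide_le_eq mult.commute)
    qed
  qed
qed

lemma mn_le: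
  assumes "0 \<le> C" "\<forall>f\<in>V. M (\<lambda>x. \<omega> x * f x) \<le> C * N f"
  shows "mult_norm V N M \<omega> \<le> C"
  unfolding mult_norm_def
  by (rule cInf_lower) (use assms in \<open>auto intro: bdd_belowI[of _ 0]\<close>)

lemma ball_map:
  assumes V: "nsf V N" and W: "nsf W M" and C1: "C1 > 0"
    and Wm: "\<forall>f\<in>V. (\<lambda>x. \<omega> x * f x) \<in> W"
    and Mb: "\<forall>f\<in>V. M (\<lambda>x. \<omega> x * f x) \<le> C1 * N f"
    and h: "h \<in> C_nsf V N"
  shows "(\<lambda>x. complex_of_real (inverse C1) * (\<omega> x * h x)) \<in> C_nsf W M"
proof -
  let ?T = "\<lambda>h::'a\<Rightarrow>complex. \<lambda>x. complex_of_real (inverse C1) * (\<omega> x * h x)"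
  have "?T ` unit_ball_nsf V N \<subseteq> closure (unit_ball_nsf W M)"
  proof
    fix g assume "g \<in> ?T ` unit_ball_nsf V N"
    then obtain f where f: "f \<in> V" "N f \<le> 1" and g: "g = ?T f"
      unfolding unit_ball_nsf_def by blast
    have inW: "(\<lambda>x. \<omega> x * f x) \<in> W" using Wm f by blast
    hence gW: "g \<in> W" using W g unfolding nsf_def by simp
    have "M g = cmod (complex_of_real (inverse C1)) * M (\<lambda>x. \<omega> x * f x)"
      using W inW g unfolding nsf_def by simp
    also have "\<dots> = inverse C1 * M (\<lambda>x. \<omega> x * f x)" using C1 by (simp add: norm_of_real del: of_real_inverse)
    also have "\<dots> \<le> inverse C1 * (C1 * N f)"
      using Mb f C1 by (intro mult_left_mono) auto
    also have "\<dots> = N f" using C1 by simp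
    finally have "M g \<le> 1" using f by linarith
    thus "g \<in> closure (unit_ball_nsf W M)" using gW
      unfolding unit_ball_nsf_def by (auto intro: closure_subset[THEN subsetD])
  qed
  hence "?T ` closure (unit_ball_nsf V N) \<subseteq> closure (unit_ball_nsf W M)"
    by (intro image_closure_subset continuous_on_subset[OF cont_mulmap]) auto
  thus ?thesis using h unfolding C_nsf_def by blast
qed

lemma hat_mult:
  assumes V: "nsf V N" and W: "nsf W M" and C1: "C1 > 0"
    and Wm: "\<forall>f\<in>V. (\<lambda>x. \<omega> x * f x) \<in> W"
    and Mb: "\<forall>f\<in>V. M (\<lambda>x. \<omega> x * f x) \<le> C1 * N f"
    and g: "g \<in> hat_space V N"
  shows "(\<lambda>x. \<omega> x * g x) \<in> hat_space W M \<and>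
         hat_norm W M (\<lambda>x. \<omega> x * g x) \<le> C1 * hat_norm V N g"
proof -
  have key: "a * C1 \<in> {b. b > 0 \<and> (\<exists>k\<in>C_nsf W M. (\<lambda>x. \<omega> x * g x) = (\<lambda>x. complex_of_real b * k x))}"
    if a: "a > 0" "h \<in> C_nsf V N" "g = (\<lambda>x. complex_of_real a * h x)" for a h
  proof -
    let ?k = "\<lambda>x. complex_of_real (inverse C1) * (\<omega> x * h x)"
    have k: "?k \<in> C_nsf W M" using ball_map[OF V W C1 Wm Mb a(2)] .
    have "(\<lambda>x. \<omega> x * g x) = (\<lambda>x. complex_of_real (a * C1) * ?k x)"
      using C1 a(3) by (auto simp: field_simps)
    thus ?thesis using k a C1 by auto
  qed
  obtain a h where ah: "a > 0" "h \<in> C_nsf V N" "g = (\<lambda>x. complex_of_real a * h x)"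
    using g unfolding hat_space_def by blast
  have mem: "(\<lambda>x. \<omega> x * g x) \<in> hat_space W M"
    using key[OF ah] unfolding hat_space_def by blast
  let ?SV = "{a. a > 0 \<and> (\<exists>f\<in>C_nsf V N. g = (\<lambda>x. complex_of_real a * f x))}"
  have neV: "?SV \<noteq> {}" using ah by blast
  have "hat_norm W M (\<lambda>x. \<omega> x * g x) / C1 \<le> hat_norm V N g"
    unfolding hat_norm_def[of V]
  proof (rule cInf_greatest[OF neV])
    fix a assume "a \<in> ?SV"
    then obtain h where a: "a > 0" "h \<in> C_nsf V N" "g = (\<lambda>x. complex_of_real a * h x)" by blast
    have "hat_norm W M (\<lambda>x. \<omega> x * g x) \<le> a * C1"
      unfolding hat_norm_def
      by (rule cInf_lower[OF key[OF a]]) (auto intro: bdd_belowI[of _ 0])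
    thus "hat_norm W M (\<lambda>x. \<omega> x * g x) / C1 \<le> a" using C1 by (simp add: divide_le_eq)
  qed
  thus ?thesis using mem C1 by (simp add: divide_le_eq mult.commute)
qed

lemma closed_piece:
  assumes V: "nsf V N" and W: "nsf W M" and reg: "regular_nsf W M" and f: "f \<in> V"
  shows "closed {\<omega>. (\<lambda>x. \<omega> x * f x) \<in> W \<and> M (\<lambda>x. \<omega> x * f x) \<le> N f}"
proof (cases "N f = 0")
  case True
  hence "f = (\<lambda>x. 0)" using V f unfolding nsf_def by blast
  moreover have "M (\<lambda>x. 0) = 0" "(\<lambda>x. 0) \<in> W" using W unfolding nsf_def by blast+
  ultimately show ?thesis using True by simp
next
  case False
  hence pos: "N f > 0" using V f unfolding nsf_def by force
  let ?c = "complex_of_real (inverse (N f))"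
  let ?T = "\<lambda>\<omega>::'a\<Rightarrow>complex. \<lambda>x. ?c * (f x * \<omega> x)"
  have eq: "{\<omega>. (\<lambda>x. \<omega> x * f x) \<in> W \<and> M (\<lambda>x. \<omega> x * f x) \<le> N f} = ?T -` unit_ball_nsf W M"
  proof (rule set_eqI)
    fix \<omega> :: "'a \<Rightarrow> complex"
    let ?g = "\<lambda>x. \<omega> x * f x"
    have Tg: "?T \<omega> = (\<lambda>x. ?c * ?g x)" by (simp add: mult.commute)
    have gT: "?g = (\<lambda>x. complex_of_real (N f) * ?T \<omega> x)" using pos by (auto simp: field_simps)
    have cm: "cmod ?c = inverse (N f)" using pos by (simp add: norm_of_real del: of_real_inverse)
    have cm2: "cmod (complex_of_real (N f)) = N f" using pos by (simp add: norm_of_real)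
    have "(?g \<in> W \<and> M ?g \<le> N f) \<longleftrightarrow> \<omega> \<in> ?T -` unit_ball_nsf W M"
    proof
      assume "?g \<in> W \<and> M ?g \<le> N f"
      hence g: "?g \<in> W" "M ?g \<le> N f" by auto
      have "?T \<omega> \<in> W" unfolding Tg using W g(1) unfolding nsf_def by simp
      moreover have "M (?T \<omega>) = inverse (N f) * M ?g" unfolding Tg using W g(1) cm unfolding nsf_def by simp
      moreover have "inverse (N f) * M ?g \<le> 1" using g(2) pos by (simp add: field_simps)
      ultimately show "\<omega> \<in> ?T -` unit_ball_nsf W M" unfolding unit_ball_nsf_def by simp
    next
      assume "\<omega> \<in> ?T -` unit_ball_nsf W M"
      hence t: "?T \<omega> \<in> W" "M (?T \<omega>) \<le> 1" unfolding unit_ball_nsf_def by auto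
      have "?g \<in> W" unfolding gT using W t(1) unfolding nsf_def by simp
      moreover have "M ?g = N f * M (?T \<omega>)" unfolding gT using W t(1) cm2 unfolding nsf_def by simp
      moreover have "N f * M (?T \<omega>) \<le> N f" using t(2) pos by simp
      ultimately show "?g \<in> W \<and> M ?g \<le> N f" by simp
    qed
    thus "\<omega> \<in> {\<omega>. (\<lambda>x. \<omega> x * f x) \<in> W \<and> M (\<lambda>x. \<omega> x * f x) \<le> N f} \<longleftrightarrow> \<omega> \<in> ?T -` unit_ball_nsf W M"
      by simp
  qed
  show ?thesis unfolding eq
    by (rule closed_vimage[OF _ cont_mulmap]) (use reg in \<open>simp add: regular_nsf_def\<close>)
qed

theorem proposition5p5:
  fixes V W :: "('x \<Rightarrow> complex) set" and N M :: "('x \<Rightarrow> complex) \<Rightarrow> real"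
  assumes "nsf V N" and "nsf W M" and "one_independent V"
  shows "(regular_nsf W M \<longrightarrow> regular_nsf (mult_space V N W M) (mult_norm V N M))
    \<and> mult_space V N W M \<subseteq> mult_space (hat_space V N) (hat_norm V N) (hat_space W M) (hat_norm W M)
    \<and> (\<forall>\<omega>\<in>mult_space V N W M.
         mult_norm (hat_space V N) (hat_norm V N) (hat_norm W M) \<omega> \<le> mult_norm V N M \<omega>)"
proof (intro conjI impI ballI subsetI)
  note V = assms(1) and W = assms(2)
  assume reg: "regular_nsf W M"
  have eq: "unit_ball_nsf (mult_space V N W M) (mult_norm V N M) =
     (\<Inter>f\<in>V. {\<omega>. (\<lambda>x. \<omega> x * f x) \<in> W \<and> M (\<lambda>x. \<omega> x * f x) \<le> N f})"
  proof (rule set_eqI)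
    fix \<omega>
    show "\<omega> \<in> unit_ball_nsf (mult_space V N W M) (mult_norm V N M) \<longleftrightarrow>
      \<omega> \<in> (\<Inter>f\<in>V. {\<omega>. (\<lambda>x. \<omega> x * f x) \<in> W \<and> M (\<lambda>x. \<omega> x * f x) \<le> N f})"
    proof
      assume a: "\<omega> \<in> unit_ball_nsf (mult_space V N W M) (mult_norm V N M)"
      hence om: "\<omega> \<in> mult_space V N W M" and le: "mult_norm V N M \<omega> \<le> 1"
        unfolding unit_ball_nsf_def by auto
      note b = mn_basic[OF V W om]
      have "M (\<lambda>x. \<omega> x * f x) \<le> N f" if "f \<in> V" for f
      proof -
        have "mult_norm V N M \<omega> * N f \<le> 1 * N f"
          using le V that unfolding nsf_def by (intro mult_right_mono) auto
        thus ?thesis using b(2) that by force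
      qed
      thus "\<omega> \<in> (\<Inter>f\<in>V. {\<omega>. (\<lambda>x. \<omega> x * f x) \<in> W \<and> M (\<lambda>x. \<omega> x * f x) \<le> N f})"
        using b(3) by blast
    next
      assume a: "\<omega> \<in> (\<Inter>f\<in>V. {\<omega>. (\<lambda>x. \<omega> x * f x) \<in> W \<and> M (\<lambda>x. \<omega> x * f x) \<le> N f})"
      hence a2: "\<forall>f\<in>V. (\<lambda>x. \<omega> x * f x) \<in> W \<and> M (\<lambda>x. \<omega> x * f x) \<le> 1 * N f"
      proof (intro ballI)
        fix f assume "f \<in> V"
        from INT_D[OF a this] show "(\<lambda>x. \<omega> x * f x) \<in> W \<and> M (\<lambda>x. \<omega> x * f x) \<le> 1 * N f" by simp
      qed
      hence om: "\<omega> \<in> mult_space V N W M" unfolding mult_space_def by (intro CollectI conjI exI[of _ 1]) simp_all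
      have "mult_norm V N M \<omega> \<le> 1" using a2 by (intro mn_le) simp_all
      thus "\<omega> \<in> unit_ball_nsf (mult_space V N W M) (mult_norm V N M)"
        using om unfolding unit_ball_nsf_def by simp
    qed
  qed
  show "regular_nsf (mult_space V N W M) (mult_norm V N M)"
    unfolding regular_nsf_def eq
    by (intro closed_INT ballI closed_piece[OF V W reg])
next
  note V = assms(1) and W = assms(2)
  fix \<omega> assume om: "\<omega> \<in> mult_space V N W M"
  note b = mn_basic[OF V W om]
  have gen: "\<forall>g\<in>hat_space V N. (\<lambda>x. \<omega> x * g x) \<in> hat_space W M \<and>
         hat_norm W M (\<lambda>x. \<omega> x * g x) \<le> C1 * hat_norm V N g" if C1: "C1 > mult_norm V N M \<omega>" for C1
  proof
    fix g assume g: "g \<in> hat_space V N"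
    have C1p: "C1 > 0" using C1 b(1) by linarith
    have "\<forall>f\<in>V. M (\<lambda>x. \<omega> x * f x) \<le> C1 * N f"
    proof
      fix f assume f: "f \<in> V"
      have "mult_norm V N M \<omega> * N f \<le> C1 * N f"
        using C1 V f unfolding nsf_def by (intro mult_right_mono) auto
      thus "M (\<lambda>x. \<omega> x * f x) \<le> C1 * N f" using b(2) f by force
    qed
    from hat_mult[OF V W C1p b(3) this g]
    show "(\<lambda>x. \<omega> x * g x) \<in> hat_space W M \<and>
         hat_norm W M (\<lambda>x. \<omega> x * g x) \<le> C1 * hat_norm V N g" .
  qed
  from gen[of "mult_norm V N M \<omega> + 1"]
  show "\<omega> \<in> mult_space (hat_space V N) (hat_norm V N) (hat_space W M) (hat_norm W M)"
    unfolding mult_space_def by auto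
  show "mult_norm (hat_space V N) (hat_norm V N) (hat_norm W M) \<omega> \<le> mult_norm V N M \<omega>"
  proof (rule field_le_epsilon)
    fix e :: real assume e: "e > 0"
    show "mult_norm (hat_space V N) (hat_norm V N) (hat_norm W M) \<omega> \<le> mult_norm V N M \<omega> + e"
      by (rule mn_le) (use gen[of "mult_norm V N M \<omega> + e"] e b(1) in auto)
  qed
qed

end
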